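(* Let $1\leq\ell<d\leq k-1$ be integers with $k-\ell$ not dividing $k$. Then $\delta_d^{\mathrm{hf}}(k,\ell)=\delta_d^{\mathrm{frct}}(k,\ell)$.
   Context: A $k$-graph $G$ has vertex set $V(G)$ and edges that are $k$-subsets. For $0\le\ell<k$, a ($k$-uniform) $\ell$-cycle is a $k$-graph whose vertices can be cyclically ordered so that every edge consists of $k$ cyclically consecutive vertices and consecutive edges intersect in exactly $\ell$ vertices. For $1\le d<k$, $\delta_d(G)$ is the largest $m$ such that every $d$-set lies in at least $m$ edges. A homomorphism $F\to G$ is a vertex map sending edges to edges; a perfect fractional $\ell$-cycle tiling of $G$ is a weighting $\omega(\phi)\in[0,1]$ of homomorphisms $\phi$ from $k$-uniform $\ell$-cycles into $G$ (finitely many nonzero) with $\sum_\phi\omega(\phi)|\phi^{-1}(v)|=1$ for all $v$. The $\ell$-line graph of $G$ has vertex set $E(G)$ with $e\sim f$ iff $|e\cap f|\ge\ell$; a subgraph is $\ell$-connected if it has no isolated vertices and its edges induce a connected subgraph of the $\ell$-line graph; an $\ell$-component is an edge-maximal $\ell$-connected subgraph. A family $\mathcal{G}$ of $k$-graphs admits a Hamilton $\ell$-framework if for every $G\in\mathcal{G}$ there is a spanning subgraph $F(G)\subseteq G$ such that (F1) $F(G)$ is an $\ell$-component of $G$; (F2) $F(G)$ has a perfect fractional $\ell$-cycle tiling; (F3) $F(H-x)\cup F(H-y)$ is $\ell$-connected for every $k$-graph $H$ and $x,y\in V(H)$ with $H-x,H-y\in\mathcal{G}$. The threshold $\delta_d^{\mathrm{hf}}(k,\ell)$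 is the infimum of $\delta\in[0,1]$ such that for every $\varepsilon>0$ there is $n_0$ such that the family of all $k$-graphs $G$ on $n\ge n_0$ vertices, $n$ divisible by $k-\ell$, with $\delta_d(G)\ge(\delta+\varepsilon)\binom{n-d}{k-d}$ admits a Hamilton $\ell$-framework. The threshold $\delta_d^{\mathrm{frct}}(k,\ell)$ is the infimum of $\delta\in[0,1]$ such that for every $\varepsilon>0$ there is $n_0$ such that every $k$-graph on $n\ge n_0$ vertices with $\delta_d(G)\ge(\delta+\varepsilon)\binom{n-d}{k-d}$ has a perfect fractional $\ell$-cycle tiling. *)

theory Defs
  imports Complex_Main
begin

type_synonym 'a hgraph = "'a set \<times> 'a set set"

definition kgraph :: "nat \<Rightarrow> 'a hgraph \<Rightarrow> bool" where
  "kgraph k G \<longleftrightarrow> finite (fst G) \<and> (\<forall>e\<in>snd G. e \<subseteq> fst G \<and> card e = k)"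

definition min_codeg_ge :: "nat \<Rightarrow> 'a hgraph \<Rightarrow> real \<Rightarrow> bool" where
  "min_codeg_ge d G x \<longleftrightarrow>
     (\<forall>S. S \<subseteq> fst G \<and> card S = d \<longrightarrow> real (card {e \<in> snd G. S \<subseteq> e}) \<ge> x)"

text \<open>The canonical l-cycle with m edges: vertex set {0..<m(k-l)}, i-th edge consists of the
  k cyclically consecutive vertices starting at i(k-l).\<close>
definition cyc_edge :: "nat \<Rightarrow> nat \<Rightarrow> nat \<Rightarrow> nat \<Rightarrow> nat set" where
  "cyc_edge k l m i = {(i * (k - l) + j) mod (m * (k - l)) | j. j < k}"

text \<open>m is an admissible number of edges: the canonical structure really is a k-uniform
  l-cycle (edges are k-sets, cyclically consecutive edges meet in exactly l vertices).\<close>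
definition cyc_ok :: "nat \<Rightarrow> nat \<Rightarrow> nat \<Rightarrow> bool" where
  "cyc_ok k l m \<longleftrightarrow> 2 \<le> m \<and>
     (\<forall>i<m. card (cyc_edge k l m i) = k \<and>
            card (cyc_edge k l m i \<inter> cyc_edge k l m (Suc i mod m)) = l)"

text \<open>A homomorphism from the canonical l-cycle with m edges into G, given as the list of images
  of the vertices 0, ..., m(k-l)-1.\<close>
definition cyc_hom :: "nat \<Rightarrow> nat \<Rightarrow> 'a hgraph \<Rightarrow> nat \<times> 'a list \<Rightarrow> bool" where
  "cyc_hom k l G \<phi> \<longleftrightarrow> (case \<phi> of (m, xs) \<Rightarrow>
      cyc_ok k l m \<and> length xs = m * (k - l) \<and> set xs \<subseteq> fst G \<and>
      (\<forall>i<m. (\<lambda>j. xs ! j) ` cyc_edge k l m i \<in> snd G))"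

definition preimage_size :: "nat \<times> 'a list \<Rightarrow> 'a \<Rightarrow> nat" where
  "preimage_size \<phi> v = card {j. j < length (snd \<phi>) \<and> snd \<phi> ! j = v}"

definition perfect_frac_tiling :: "nat \<Rightarrow> nat \<Rightarrow> 'a hgraph \<Rightarrow> bool" where
  "perfect_frac_tiling k l G \<longleftrightarrow>
     (\<exists>\<omega> :: nat \<times> 'a list \<Rightarrow> real.
        finite {\<phi>. \<omega> \<phi> \<noteq> 0} \<and>
        (\<forall>\<phi>. \<omega> \<phi> \<noteq> 0 \<longrightarrow> cyc_hom k l G \<phi>) \<and>
        (\<forall>\<phi>. 0 \<le> \<omega> \<phi> \<and> \<omega> \<phi> \<le> 1) \<and>
        (\<forall>v\<in>fst G. (\<Sum>\<phi>\<in>{\<phi>. \<omega> \<phi> \<noteq> 0}. \<omega> \<phi> * real (preimage_size \<phi> v)) = 1))"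

definition subgraph :: "'a hgraph \<Rightarrow> 'a hgraph \<Rightarrow> bool" where
  "subgraph H G \<longleftrightarrow> fst H \<subseteq> fst G \<and> snd H \<subseteq> snd G \<and> (\<forall>e\<in>snd H. e \<subseteq> fst H)"

definition line_adj :: "nat \<Rightarrow> 'a set set \<Rightarrow> ('a set \<times> 'a set) set" where
  "line_adj l E = {(e, f). e \<in> E \<and> f \<in> E \<and> card (e \<inter> f) \<ge> l}"

definition ell_connected :: "nat \<Rightarrow> 'a hgraph \<Rightarrow> bool" where
  "ell_connected l H \<longleftrightarrow>
     (\<forall>v\<in>fst H. \<exists>e\<in>snd H. v \<in> e) \<and>
     (\<forall>e\<in>snd H. \<forall>f\<in>snd H. (e, f) \<in> (line_adj l (snd H))\<^sup>*)"

definition ell_component :: "nat \<Rightarrow> 'a hgraph \<Rightarrow> 'a hgraph \<Rightarrow> bool" where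
  "ell_component l H G \<longleftrightarrow> subgraph H G \<and> ell_connected l H \<and>
     (\<forall>H'. subgraph H' G \<and> ell_connected l H' \<and> snd H \<subseteq> snd H' \<longrightarrow> snd H' = snd H)"

definition delete_vertex :: "'a hgraph \<Rightarrow> 'a \<Rightarrow> 'a hgraph" where
  "delete_vertex G x = (fst G - {x}, {e \<in> snd G. x \<notin> e})"

definition graph_union :: "'a hgraph \<Rightarrow> 'a hgraph \<Rightarrow> 'a hgraph" where
  "graph_union G H = (fst G \<union> fst H, snd G \<union> snd H)"

definition hamilton_framework :: "nat \<Rightarrow> nat \<Rightarrow> 'a hgraph set \<Rightarrow> bool" where
  "hamilton_framework k l \<G> \<longleftrightarrow>
     (\<exists>F :: 'a hgraph \<Rightarrow> 'a hgraph.
        (\<forall>G\<in>\<G>. fst (F G) = fst G \<and> snd (F G) \<subseteq> snd G \<and>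
                 ell_component l (F G) G \<and> perfect_frac_tiling k l (F G)) \<and>
        (\<forall>H x y. kgraph k H \<and> x \<in> fst H \<and> y \<in> fst H \<and>
                 delete_vertex H x \<in> \<G> \<and> delete_vertex H y \<in> \<G> \<longrightarrow>
                 ell_connected l (graph_union (F (delete_vertex H x)) (F (delete_vertex H y)))))"

definition hf_family :: "nat \<Rightarrow> nat \<Rightarrow> nat \<Rightarrow> real \<Rightarrow> nat \<Rightarrow> nat hgraph set" where
  "hf_family d k l \<delta> n0 = {G. kgraph k G \<and> card (fst G) \<ge> n0 \<and> (k - l) dvd card (fst G) \<and>
      min_codeg_ge d G (\<delta> * real (card (fst G) - d choose (k - d)))}"

definition delta_hf :: "nat \<Rightarrow> nat \<Rightarrow> nat \<Rightarrow> real" where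
  "delta_hf d k l = Inf {\<delta>. 0 \<le> \<delta> \<and> \<delta> \<le> 1 \<and>
     (\<forall>\<epsilon>>0. \<exists>n0. hamilton_framework k l (hf_family d k l (\<delta> + \<epsilon>) n0))}"

definition delta_frct :: "nat \<Rightarrow> nat \<Rightarrow> nat \<Rightarrow> real" where
  "delta_frct d k l = Inf {\<delta>. 0 \<le> \<delta> \<and> \<delta> \<le> 1 \<and>
     (\<forall>\<epsilon>>0. \<exists>n0. \<forall>G :: nat hgraph. kgraph k G \<and> card (fst G) \<ge> n0 \<and>
        min_codeg_ge d G ((\<delta> + \<epsilon>) * real (card (fst G) - d choose (k - d))) \<longrightarrow>
        perfect_frac_tiling k l G)}"

end

theory Submission
  imports Defs
begin

lemma count_sup:
  assumes "finite V" "T \<subseteq> V"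
  shows "card {e. e \<subseteq> V \<and> card e = k \<and> T \<subseteq> e} \<le> (card V - card T) choose (k - card T)"
proof -
  have fT: "finite T" using assms finite_subset by blast
  have "card {e. e \<subseteq> V \<and> card e = k \<and> T \<subseteq> e} \<le> card {B. B \<subseteq> V - T \<and> card B = k - card T}"
  proof (rule card_inj_on_le[where f="\<lambda>e. e - T"])
    show "inj_on (\<lambda>e. e - T) {e. e \<subseteq> V \<and> card e = k \<and> T \<subseteq> e}"
      by (rule inj_onI) auto
    show "(\<lambda>e. e - T) ` {e. e \<subseteq> V \<and> card e = k \<and> T \<subseteq> e} \<subseteq> {B. B \<subseteq> V - T \<and> card B = k - card T}"
      using fT by (auto simp: card_Diff_subset)
    show "finite {B. B \<subseteq> V - T \<and> card B = k - card T}" using assms by simp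
  qed
  also have "\<dots> = card (V - T) choose (k - card T)" using assms by (simp add: n_subsets)
  also have "card (V - T) = card V - card T" using assms fT by (simp add: card_Diff_subset)
  finally show ?thesis .
qed

lemma extend_edge:
  assumes "\<forall>S. S \<subseteq> V \<and> card S = d \<longrightarrow> (\<exists>e\<in>E. S \<subseteq> e)"
    and "finite V" "T \<subseteq> V" "card T \<le> d" "d \<le> card V"
  shows "\<exists>e\<in>E. T \<subseteq> e"
proof -
  have fT: "finite T" using assms finite_subset by blast
  have "d - card T \<le> card (V - T)" using assms fT by (simp add: card_Diff_subset)
  then obtain U where U: "U \<subseteq> V - T" "card U = d - card T" "finite U"
    by (rule obtain_subset_with_card_n)
  have "card (T \<union> U) = d" using U fT assms(4) by (subst card_Un_disjoint) auto
  moreover have "T \<union> U \<subseteq> V" using U assms by auto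
  ultimately obtain e where "e \<in> E" "T \<union> U \<subseteq> e" using assms(1) by blast
  then show ?thesis by blast
qed

lemma conn_core:
  fixes E :: "'a set set"
  assumes pos: "\<And>T. T \<subseteq> V \<Longrightarrow> card T \<le> Suc l \<Longrightarrow> \<exists>e\<in>E. T \<subseteq> e"
    and EV: "\<forall>e\<in>E. e \<subseteq> V" and fV: "finite V"
    and B: "card B = l" "B \<subseteq> f" "f \<in> E"
  shows "card (A - B) = n \<Longrightarrow> card A = l \<Longrightarrow> A \<subseteq> e \<Longrightarrow> e \<in> E \<Longrightarrow> (e, f) \<in> (line_adj l E)\<^sup>*"
proof (induction n arbitrary: A e)
  case 0
  have "A \<subseteq> V" using 0 EV by blast
  hence fA: "finite A" using fV finite_subset by blast
  have "B \<subseteq> V" using B EV by blast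
  hence fB: "finite B" using fV finite_subset by blast
  have "A - B = {}" using 0 fA by (meson card_0_eq finite_Diff)
  hence "A \<subseteq> B" by blast
  hence "A = B" using 0 fB B by (metis card_subset_eq)
  hence "A \<subseteq> e \<inter> f" using 0 B by auto
  hence "card A \<le> card (e \<inter> f)" using EV 0 fV by (intro card_mono) (auto intro: finite_subset)
  hence "(e, f) \<in> line_adj l E" using 0 B by (simp add: line_adj_def)
  then show ?case by blast
next
  case (Suc n)
  have "A \<subseteq> V" using Suc.prems EV by blast
  hence fA: "finite A" using fV finite_subset by blast
  have "B \<subseteq> V" using B EV by blast
  hence fB: "finite B" using fV finite_subset by blast
  have "A - B \<noteq> {}" using Suc.prems(1) by (metis card.empty nat.distinct(1))
  then obtain a where a: "a \<in> A" "a \<notin> B" by blast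
  have "\<not> B \<subseteq> A"
  proof
    assume "B \<subseteq> A" hence "B = A" using fA Suc.prems B by (simp add: card_subset_eq)
    thus False using a by blast
  qed
  then obtain b where b: "b \<in> B" "b \<notin> A" by blast
  define A' where "A' = insert b (A - {a})"
  have "card (A - {a}) = l - 1" using a fA Suc.prems by (simp add: card_Diff_singleton)
  moreover have "l \<ge> 1" using a fA Suc.prems by (auto simp: Suc_le_eq card_gt_0_iff)
  ultimately have cA': "card A' = l" using b fA unfolding A'_def by simp
  have "A' - B = (A - B) - {a}" unfolding A'_def using b by auto
  hence cA'B: "card (A' - B) = n" using Suc.prems a by (simp add: card_Diff_singleton)
  have TV: "insert b A \<subseteq> V" using Suc.prems EV B b by blast
  have "card (insert b A) \<le> Suc l" using fA Suc.prems by (simp add: card_insert_if)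
  then obtain g where g: "g \<in> E" "insert b A \<subseteq> g" using pos TV by blast
  have "A \<subseteq> e \<inter> g" using g Suc.prems by auto
  hence "card A \<le> card (e \<inter> g)" using EV g fV by (intro card_mono) (auto intro: finite_subset)
  hence eg: "(e, g) \<in> line_adj l E" using Suc.prems g by (simp add: line_adj_def)
  have "A' \<subseteq> g" using g unfolding A'_def by auto
  hence "(g, f) \<in> (line_adj l E)\<^sup>*" using Suc.IH[OF cA'B cA'] g by blast
  with eg show ?case by (meson converse_rtrancl_into_rtrancl)
qed


lemma conn_graph:
  assumes kg: "kgraph k G" and lk: "l \<le> k" and ld: "Suc l \<le> d" and dV: "d \<le> card (fst G)"
    and pos: "\<forall>S. S \<subseteq> fst G \<and> card S = d \<longrightarrow> (\<exists>e\<in>snd G. S \<subseteq> e)"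
  shows "ell_connected l G"
proof -
  have fV: "finite (fst G)" and EV: "\<forall>e\<in>snd G. e \<subseteq> fst G" and ck: "\<forall>e\<in>snd G. card e = k"
    using kg by (auto simp: kgraph_def)
  have posT: "\<exists>e\<in>snd G. T \<subseteq> e" if "T \<subseteq> fst G" "card T \<le> d" for T
    using extend_edge[OF pos fV that dV] .
  show ?thesis unfolding ell_connected_def
  proof (intro conjI ballI)
    fix v assume "v \<in> fst G"
    then obtain e where "e \<in> snd G" "{v} \<subseteq> e" using posT[of "{v}"] ld by auto
    then show "\<exists>e\<in>snd G. v \<in> e" by blast
  next
    fix e f assume e: "e \<in> snd G" and f: "f \<in> snd G"
    obtain A where A: "A \<subseteq> e" "card A = l" using ck e lk obtain_subset_with_card_n[of l e] by metis
    obtain B where B: "B \<subseteq> f" "card B = l" using ck f lk obtain_subset_with_card_n[of l f] by metis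
    have pos': "\<And>T. T \<subseteq> fst G \<Longrightarrow> card T \<le> Suc l \<Longrightarrow> \<exists>e\<in>snd G. T \<subseteq> e"
      using posT ld by force
    show "(e, f) \<in> (line_adj l (snd G))\<^sup>*"
      using conn_core[OF pos' EV fV B(2) B(1) f refl A(2) A(1) e] .
  qed
qed

lemma line_mono: "E1 \<subseteq> E2 \<Longrightarrow> (line_adj l E1)\<^sup>* \<subseteq> (line_adj l E2)\<^sup>*"
  by (rule rtrancl_mono) (auto simp: line_adj_def)

lemma conn_union:
  assumes c1: "ell_connected l G1" and c2: "ell_connected l G2"
    and e: "e \<in> snd G1" and f: "f \<in> snd G2" and ef: "l \<le> card (e \<inter> f)"
  shows "ell_connected l (graph_union G1 G2)"
proof -
  let ?E = "snd G1 \<union> snd G2"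
  have r1: "(a, b) \<in> (line_adj l ?E)\<^sup>*" if "a \<in> snd G1" "b \<in> snd G1" for a b
    using c1 that line_mono[of "snd G1" ?E l] unfolding ell_connected_def by blast
  have r2: "(a, b) \<in> (line_adj l ?E)\<^sup>*" if "a \<in> snd G2" "b \<in> snd G2" for a b
    using c2 that line_mono[of "snd G2" ?E l] unfolding ell_connected_def by blast
  have ef1: "(e, f) \<in> (line_adj l ?E)\<^sup>*" using e f ef by (auto simp: line_adj_def)
  have fe1: "(f, e) \<in> (line_adj l ?E)\<^sup>*" using e f ef by (auto simp: line_adj_def Int_commute)
  show ?thesis unfolding ell_connected_def graph_union_def
  proof (simp, intro conjI ballI)
    fix v assume "v \<in> fst G1 \<union> fst G2"
    then show "\<exists>e\<in>snd G1 \<union> snd G2. v \<in> e" using c1 c2 unfolding ell_connected_def by blast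
  next
    fix a b assume a: "a \<in> ?E" and b: "b \<in> ?E"
    show "(a, b) \<in> (line_adj l ?E)\<^sup>*"
    proof (cases "a \<in> snd G1")
      case True
      show ?thesis
      proof (cases "b \<in> snd G1")
        case True thus ?thesis using r1 \<open>a \<in> snd G1\<close> by blast
      next
        case False hence "b \<in> snd G2" using b by blast
        thus ?thesis using r1[OF \<open>a \<in> snd G1\<close> e] ef1 r2[OF f] by (meson rtrancl_trans)
      qed
    next
      case False hence a2: "a \<in> snd G2" using a by blast
      show ?thesis
      proof (cases "b \<in> snd G2")
        case True thus ?thesis using r2 a2 by blast
      next
        case False hence "b \<in> snd G1" using b by blast
        thus ?thesis using r2[OF a2 f] fe1 r1[OF e] by (meson rtrancl_trans)
      qed
    qed
  qed
qed

lemma hom_transfer: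
  assumes "cyc_hom k l H \<phi>" "fst H \<subseteq> fst G" "snd H \<subseteq> snd G"
  shows "cyc_hom k l G \<phi> \<and> set (snd \<phi>) \<subseteq> fst H"
  using assms by (cases \<phi>) (auto simp: cyc_hom_def)

lemma hom_len:
  assumes "cyc_hom k l G \<phi>" "l < k"
  shows "0 < length (snd \<phi>)"
  using assms by (cases \<phi>) (auto simp: cyc_hom_def cyc_ok_def)


lemma tiling_combine:
  fixes G :: "'a hgraph" and RR :: "'a set set" and c :: nat
  assumes fRR: "finite RR" and lk: "l < k" and c0: "0 < c"
    and cnt: "\<forall>v\<in>fst G. card {R\<in>RR. v \<notin> R} = c"
    and til: "\<forall>R\<in>RR. \<exists>H. perfect_frac_tiling k l H \<and> fst H = fst G - R \<and> snd H \<subseteq> snd G"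
  shows "perfect_frac_tiling k l G"
proof -
  let ?P = "\<lambda>R W. finite {\<phi>. W \<phi> \<noteq> 0} \<and>
     (\<forall>\<phi>. W \<phi> \<noteq> 0 \<longrightarrow> cyc_hom k l G \<phi> \<and> set (snd \<phi>) \<subseteq> fst G - R) \<and> (\<forall>\<phi>. 0 \<le> W \<phi>) \<and>
     (\<forall>v\<in>fst G - R. (\<Sum>\<phi>\<in>{\<phi>. W \<phi> \<noteq> 0}. W \<phi> * real (preimage_size \<phi> v)) = 1)"
  have "\<forall>R\<in>RR. \<exists>W. ?P R W"
  proof
    fix R assume "R \<in> RR"
    then obtain H where H: "perfect_frac_tiling k l H" "fst H = fst G - R" "snd H \<subseteq> snd G"
      using til by blast
    then obtain W where W: "finite {\<phi>. W \<phi> \<noteq> 0}" "\<forall>\<phi>. W \<phi> \<noteq> 0 \<longrightarrow> cyc_hom k l H \<phi>"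
      "\<forall>\<phi>. 0 \<le> W \<phi> \<and> W \<phi> \<le> 1"
      "\<forall>v\<in>fst H. (\<Sum>\<phi>\<in>{\<phi>. W \<phi> \<noteq> 0}. W \<phi> * real (preimage_size \<phi> v)) = 1"
      unfolding perfect_frac_tiling_def by blast
    have "\<forall>\<phi>. W \<phi> \<noteq> 0 \<longrightarrow> cyc_hom k l G \<phi> \<and> set (snd \<phi>) \<subseteq> fst G - R"
    proof (intro allI impI)
      fix \<phi> assume "W \<phi> \<noteq> 0"
      hence "cyc_hom k l H \<phi>" using W(2) by blast
      thus "cyc_hom k l G \<phi> \<and> set (snd \<phi>) \<subseteq> fst G - R"
        using hom_transfer[of k l H \<phi> G] H by auto
    qed
    then have "?P R W" using W(1) W(3) W(4) H(2) by simp
    then show "\<exists>W. ?P R W" by blast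
  qed
  from bchoice[OF this] obtain W where W: "\<forall>R\<in>RR. ?P R (W R)" by (elim exE)
  define \<omega> where "\<omega> \<phi> = (\<Sum>R\<in>RR. W R \<phi>) / real c" for \<phi>
  define U where "U = (\<Union>R\<in>RR. {\<phi>. W R \<phi> \<noteq> 0})"
  have fU: "finite U" unfolding U_def using fRR W by (intro finite_UN_I) auto
  have nz: "\<exists>R\<in>RR. W R \<phi> \<noteq> 0" if "\<omega> \<phi> \<noteq> 0" for \<phi>
  proof (rule ccontr)
    assume "\<not> ?thesis" hence "(\<Sum>R\<in>RR. W R \<phi>) = 0" by simp
    thus False using that unfolding \<omega>_def by simp
  qed
  have suppU: "{\<phi>. \<omega> \<phi> \<noteq> 0} \<subseteq> U" unfolding U_def using nz by blast
  have fS: "finite {\<phi>. \<omega> \<phi> \<noteq> 0}" using suppU fU finite_subset by blast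
  have nn: "0 \<le> \<omega> \<phi>" for \<phi>
  proof -
    have "\<forall>R\<in>RR. 0 \<le> W R \<phi>" using W by blast
    hence "0 \<le> (\<Sum>R\<in>RR. W R \<phi>)" by (simp add: sum_nonneg)
    thus ?thesis unfolding \<omega>_def by simp
  qed
  have hom: "cyc_hom k l G \<phi>" if "\<omega> \<phi> \<noteq> 0" for \<phi> using nz[OF that] W by blast
  have inner: "(\<Sum>\<phi>\<in>U. W R \<phi> * real (preimage_size \<phi> v)) = (if v \<notin> R then 1 else 0)"
    if R: "R \<in> RR" and v: "v \<in> fst G" for R v
  proof -
    have sub: "{\<phi>. W R \<phi> \<noteq> 0} \<subseteq> U" unfolding U_def using R by blast
    have "(\<Sum>\<phi>\<in>U. W R \<phi> * real (preimage_size \<phi> v)) =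
          (\<Sum>\<phi>\<in>{\<phi>. W R \<phi> \<noteq> 0}. W R \<phi> * real (preimage_size \<phi> v))"
      by (rule sum.mono_neutral_right[OF fU sub]) auto
    also have "\<dots> = (if v \<notin> R then 1 else 0)"
    proof (cases "v \<in> R")
      case False thus ?thesis using W R v by auto
    next
      case True
      have "preimage_size \<phi> v = 0" if "W R \<phi> \<noteq> 0" for \<phi>
      proof -
        have "v \<notin> set (snd \<phi>)" using W R that True by blast
        hence "{j. j < length (snd \<phi>) \<and> snd \<phi> ! j = v} = {}" by (auto simp: nth_mem)
        thus ?thesis unfolding preimage_size_def by simp
      qed
      thus ?thesis using True by simp
    qed
    finally show ?thesis .
  qed
  have eq: "(\<Sum>\<phi>\<in>{\<phi>. \<omega> \<phi> \<noteq> 0}. \<omega> \<phi> * real (preimage_size \<phi> v)) = 1" if v: "v \<in> fst G" for v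
  proof -
    have "(\<Sum>\<phi>\<in>{\<phi>. \<omega> \<phi> \<noteq> 0}. \<omega> \<phi> * real (preimage_size \<phi> v)) =
          (\<Sum>\<phi>\<in>U. \<omega> \<phi> * real (preimage_size \<phi> v))"
      by (rule sum.mono_neutral_left[OF fU suppU]) auto
    also have "\<dots> = (\<Sum>\<phi>\<in>U. \<Sum>R\<in>RR. W R \<phi> * real (preimage_size \<phi> v)) / real c"
      unfolding \<omega>_def by (simp add: sum_divide_distrib sum_distrib_right)
    also have "\<dots> = (\<Sum>R\<in>RR. \<Sum>\<phi>\<in>U. W R \<phi> * real (preimage_size \<phi> v)) / real c"
      by (subst sum.swap) simp
    also have "\<dots> = (\<Sum>R\<in>RR. (if v \<notin> R then 1 else 0)) / real c"
      using inner v by simp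
    also have "(\<Sum>R\<in>RR. (if v \<notin> R then 1 else 0)) = (\<Sum>R\<in>{R\<in>RR. v \<notin> R}. (1::real))"
      using sum.inter_filter[OF fRR, of "\<lambda>_. (1::real)" "\<lambda>R. v \<notin> R"] by simp
    also have "\<dots> = real c" using cnt v by simp
    finally show ?thesis using c0 by simp
  qed
  have le1: "\<omega> \<phi> \<le> 1" for \<phi>
  proof (cases "\<omega> \<phi> = 0")
    case False
    have h: "cyc_hom k l G \<phi>" using hom False by blast
    have len: "0 < length (snd \<phi>)" using hom_len[OF h lk] .
    define v where "v = snd \<phi> ! 0"
    have vG: "v \<in> fst G" using h len unfolding v_def by (cases \<phi>) (auto simp: cyc_hom_def)
    have "0 \<in> {j. j < length (snd \<phi>) \<and> snd \<phi> ! j = v}" using len v_def by simp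
    moreover have "finite {j. j < length (snd \<phi>) \<and> snd \<phi> ! j = v}" by simp
    ultimately have "0 < preimage_size \<phi> v" unfolding preimage_size_def
      by (auto simp: card_gt_0_iff)
    hence p1: "1 \<le> real (preimage_size \<phi> v)" by simp
    have "\<omega> \<phi> \<le> \<omega> \<phi> * real (preimage_size \<phi> v)" using mult_left_mono[OF p1 nn[of \<phi>]] by simp
    also have "\<dots> \<le> (\<Sum>\<phi>\<in>{\<phi>. \<omega> \<phi> \<noteq> 0}. \<omega> \<phi> * real (preimage_size \<phi> v))"
      by (rule member_le_sum) (use False fS nn in auto)
    also have "\<dots> = 1" using eq vG .
    finally show ?thesis .
  qed simp
  show ?thesis unfolding perfect_frac_tiling_def
    using fS hom nn le1 eq by blast
qed


lemma codeg_remove: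
  assumes kg: "kgraph k G" and fR: "finite R" and RV: "R \<subseteq> fst G"
    and S: "S \<subseteq> fst G - R" and cS: "card S = d" and dk: "d < k"
  shows "card {e\<in>snd G. S \<subseteq> e} \<le> card {e\<in>snd G. e \<inter> R = {} \<and> S \<subseteq> e}
           + card R * ((card (fst G) - Suc d) choose (k - Suc d))"
proof -
  let ?V = "fst G" and ?E = "snd G"
  let ?A = "{e\<in>?E. e \<inter> R = {} \<and> S \<subseteq> e}"
  let ?B = "\<lambda>x. {e\<in>?E. insert x S \<subseteq> e}"
  let ?C = "(card ?V - Suc d) choose (k - Suc d)"
  have fV: "finite ?V" and EV: "\<forall>e\<in>?E. e \<subseteq> ?V \<and> card e = k" using kg by (auto simp: kgraph_def)
  have fE: "finite ?E" using fV EV by (meson finite_Pow_iff finite_subset PowI subsetI)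
  have fS: "finite S" using S fV finite_subset by blast
  have sub: "{e\<in>?E. S \<subseteq> e} \<subseteq> ?A \<union> (\<Union>x\<in>R. ?B x)" by auto
  have "card {e\<in>?E. S \<subseteq> e} \<le> card (?A \<union> (\<Union>x\<in>R. ?B x))"
    by (rule card_mono[OF _ sub]) (use fE fR in \<open>auto intro: finite_subset\<close>)
  also have "\<dots> \<le> card ?A + card (\<Union>x\<in>R. ?B x)" by (rule card_Un_le)
  also have "card (\<Union>x\<in>R. ?B x) \<le> (\<Sum>x\<in>R. card (?B x))" by (rule card_UN_le[OF fR])
  also have "\<dots> \<le> (\<Sum>x\<in>R. ?C)"
  proof (rule sum_mono)
    fix x assume x: "x \<in> R"
    have xS: "x \<notin> S" using x S by auto
    have ci: "card (insert x S) = Suc d" using xS fS cS by simp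
    have iV: "insert x S \<subseteq> ?V" using x RV S by auto
    have "card (?B x) \<le> card {e. e \<subseteq> ?V \<and> card e = k \<and> insert x S \<subseteq> e}"
      by (rule card_mono) (use fV EV in auto)
    also have "\<dots> \<le> (card ?V - card (insert x S)) choose (k - card (insert x S))"
      by (rule count_sup[OF fV iV])
    finally show "card (?B x) \<le> ?C" using ci by simp
  qed
  also have "\<dots> = card R * ?C" by simp
  finally show ?thesis by simp
qed

lemma arith_bound:
  fixes n d k r cR cF :: nat and \<delta> \<epsilon> :: real
  assumes dk: "d < k" and dn: "Suc d \<le> n" and rk: "r < k" and \<epsilon>: "0 < \<epsilon>" and \<delta>: "0 \<le> \<delta>"
    and big: "2 * real k ^ 2 \<le> \<epsilon> * real (n - d)"
    and X1: "real cF \<le> real cR + real r * real ((n - Suc d) choose (k - Suc d))"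
    and X2: "(\<delta> + \<epsilon>) * real ((n - d) choose (k - d)) \<le> real cF"
  shows "(\<delta> + \<epsilon> / 2) * real ((n - r - d) choose (k - d)) \<le> real cR"
proof -
  define a where "a = n - Suc d"
  define b where "b = k - Suc d"
  have na: "n - d = Suc a" using dn unfolding a_def by simp
  have kb: "k - d = Suc b" using dk unfolding b_def by simp
  define X where "X = real ((n - d) choose (k - d))"
  define Y where "Y = real ((n - Suc d) choose (k - Suc d))"
  have XY: "real (n - d) * Y = X * real (k - d)"
    unfolding X_def Y_def na kb a_def[symmetric] b_def[symmetric]
    using Suc_times_binomial_eq[of a b] by (metis of_nat_mult)
  have X0: "0 \<le> X" "0 \<le> Y" unfolding X_def Y_def by simp_all
  have nd0: "0 < real (n - d)" using dn by simp
  have "real r * real (k - d) \<le> real k * real k"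
    using rk dk by (intro mult_mono) auto
  hence "real r * real (k - d) * X \<le> real k ^ 2 * X" using X0 by (simp add: power2_eq_square mult_right_mono)
  also have "\<dots> \<le> \<epsilon> * real (n - d) / 2 * X" using big X0 by (intro mult_right_mono) auto
  finally have c1: "real r * real (k - d) * X \<le> \<epsilon> * real (n - d) / 2 * X" .
  have "real (n - d) * (real r * Y) = real r * real (k - d) * X"
    using XY by (metis mult.assoc mult.commute)
  also have "\<dots> \<le> \<epsilon> * real (n - d) / 2 * X" by (rule c1)
  also have "\<dots> = real (n - d) * (\<epsilon> / 2 * X)" by simp
  finally have "real (n - d) * (real r * Y) \<le> real (n - d) * (\<epsilon> / 2 * X)" .
  hence rY: "real r * Y \<le> \<epsilon> / 2 * X" using nd0 by simp
  have "real ((n - r - d) choose (k - d)) \<le> X" unfolding X_def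
    by (simp add: binomial_right_mono)
  hence "(\<delta> + \<epsilon> / 2) * real ((n - r - d) choose (k - d)) \<le> (\<delta> + \<epsilon> / 2) * X"
    using \<delta> \<epsilon> by (intro mult_left_mono) auto
  also have "\<dots> \<le> real cR" using X1 X2 rY unfolding X_def[symmetric] Y_def[symmetric]
    by (simp add: algebra_simps)
  finally show ?thesis .
qed


lemma fam_pos:
  assumes G: "G \<in> hf_family d k l \<delta>' N" and \<delta>': "0 < \<delta>'" and Nk: "k \<le> N" and dk: "d \<le> k"
  shows "\<forall>S. S \<subseteq> fst G \<and> card S = d \<longrightarrow> (\<exists>e\<in>snd G. S \<subseteq> e)"
proof (intro allI impI)
  fix S assume S: "S \<subseteq> fst G \<and> card S = d"
  have cG: "k \<le> card (fst G)" using G Nk unfolding hf_family_def by simp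
  have "0 < real ((card (fst G) - d) choose (k - d))" using cG dk by (simp add: zero_less_binomial)
  hence "0 < \<delta>' * real ((card (fst G) - d) choose (k - d))" using \<delta>' by simp
  also have "\<dots> \<le> real (card {e \<in> snd G. S \<subseteq> e})"
    using G S unfolding hf_family_def min_codeg_ge_def by blast
  finally have "{e \<in> snd G. S \<subseteq> e} \<noteq> {}" by (metis card.empty of_nat_0 less_irrefl)
  then show "\<exists>e\<in>snd G. S \<subseteq> e" by blast
qed

lemma fam_conn:
  assumes G: "G \<in> hf_family d k l \<delta>' N" and \<delta>': "0 < \<delta>'" and Nk: "k \<le> N" and dk: "d \<le> k"
    and ld: "l < d"
  shows "ell_connected l G"
proof -
  have kg: "kgraph k G" and cG: "N \<le> card (fst G)" using G unfolding hf_family_def by auto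
  show ?thesis
    by (rule conn_graph[OF kg _ _ _ fam_pos[OF G \<delta>' Nk dk]]) (use ld dk cG Nk in auto)
qed

lemma frct_to_hf:
  fixes d k l n0 :: nat and \<delta> \<epsilon> :: real
  assumes ld: "l < d" and dk: "d \<le> k - 1" and \<delta>: "0 \<le> \<delta>" and \<epsilon>: "0 < \<epsilon>"
    and FR: "\<forall>G :: nat hgraph. kgraph k G \<and> card (fst G) \<ge> n0 \<and>
        min_codeg_ge d G ((\<delta> + \<epsilon>) * real (card (fst G) - d choose (k - d))) \<longrightarrow>
        perfect_frac_tiling k l G"
  shows "hamilton_framework k l (hf_family d k l (\<delta> + \<epsilon>) (n0 + k + d + 2))"
proof -
  let ?N = "n0 + k + d + 2"
  have dk': "d \<le> k" using dk by simp
  have pos: "0 < \<delta> + \<epsilon>" using \<delta> \<epsilon> by simp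
  have Nk: "k \<le> ?N" by simp
  have P1: "fst G = fst G \<and> snd G \<subseteq> snd G \<and> ell_component l G G \<and> perfect_frac_tiling k l G"
    if G: "G \<in> hf_family d k l (\<delta> + \<epsilon>) ?N" for G
  proof -
    have kg: "kgraph k G" using G unfolding hf_family_def by simp
    have conn: "ell_connected l G" by (rule fam_conn[OF G pos Nk dk' ld])
    have "subgraph G G" using kg by (auto simp: subgraph_def kgraph_def)
    hence comp: "ell_component l G G" using conn unfolding ell_component_def subgraph_def by auto
    have "kgraph k G \<and> card (fst G) \<ge> n0 \<and>
        min_codeg_ge d G ((\<delta> + \<epsilon>) * real (card (fst G) - d choose (k - d)))"
      using G unfolding hf_family_def by auto
    hence "perfect_frac_tiling k l G" using FR by blast
    thus ?thesis using comp by simp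
  qed
  have P2: "ell_connected l (graph_union (delete_vertex H x) (delete_vertex H y))"
    if H: "kgraph k H" "x \<in> fst H" "y \<in> fst H"
      and Hx: "delete_vertex H x \<in> hf_family d k l (\<delta> + \<epsilon>) ?N"
      and Hy: "delete_vertex H y \<in> hf_family d k l (\<delta> + \<epsilon>) ?N" for H :: "nat hgraph" and x y
  proof -
    let ?Hx = "delete_vertex H x" and ?Hy = "delete_vertex H y"
    have cx: "?N \<le> card (fst H - {x})" using Hx unfolding hf_family_def delete_vertex_def by simp
    have fH: "finite (fst H)" using H unfolding kgraph_def by simp
    have "card (fst H - {x}) - 1 \<le> card (fst H - {x} - {y})"
      using fH by (metis card_Diff_singleton_if diff_le_self finite_Diff order_refl)
    hence "d \<le> card (fst H - {x} - {y})" using cx by simp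
    then obtain S where S: "S \<subseteq> fst H - {x} - {y}" "card S = d" "finite S"
      by (rule obtain_subset_with_card_n)
    have Sx: "S \<subseteq> fst ?Hx" and Sy: "S \<subseteq> fst ?Hy" using S by (auto simp: delete_vertex_def)
    obtain e where e: "e \<in> snd ?Hx" "S \<subseteq> e" using fam_pos[OF Hx pos Nk dk'] Sx S by blast
    obtain f where f: "f \<in> snd ?Hy" "S \<subseteq> f" using fam_pos[OF Hy pos Nk dk'] Sy S by blast
    have "finite e" using e H fH unfolding delete_vertex_def kgraph_def by (auto intro: finite_subset)
    hence "card S \<le> card (e \<inter> f)" using e f by (intro card_mono) auto
    hence "l \<le> card (e \<inter> f)" using S ld by simp
    thus ?thesis
      by (rule conn_union[OF fam_conn[OF Hx pos Nk dk' ld] fam_conn[OF Hy pos Nk dk' ld] e(1) f(1)])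
  qed
  show ?thesis unfolding hamilton_framework_def
    by (rule exI[of _ "\<lambda>G. G"]) (use P1 P2 in auto)
qed


lemma hf_to_frct:
  fixes d k l n0 :: nat and \<delta> \<epsilon> :: real
  assumes ld: "l < d" and dk: "d \<le> k - 1" and \<delta>: "0 \<le> \<delta>" and \<epsilon>: "0 < \<epsilon>"
    and HF: "hamilton_framework k l (hf_family d k l (\<delta> + \<epsilon> / 2) n0)"
  shows "\<exists>N. \<forall>G :: nat hgraph. kgraph k G \<and> card (fst G) \<ge> N \<and>
        min_codeg_ge d G ((\<delta> + \<epsilon>) * real (card (fst G) - d choose (k - d))) \<longrightarrow>
        perfect_frac_tiling k l G"
proof -
  obtain F :: "nat hgraph \<Rightarrow> nat hgraph" where
    F: "\<forall>G\<in>hf_family d k l (\<delta> + \<epsilon> / 2) n0. fst (F G) = fst G \<and> snd (F G) \<subseteq> snd G \<and>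
                 ell_component l (F G) G \<and> perfect_frac_tiling k l (F G)"
    using HF unfolding hamilton_framework_def by blast
  define N where "N = n0 + k + d + nat \<lceil>2 * real k ^ 2 / \<epsilon>\<rceil> + 1"
  have dk': "d < k" using dk ld by simp
  have lk: "l < k" using ld dk' by simp
  show ?thesis
  proof (intro exI allI impI)
    fix G :: "nat hgraph"
    assume A: "kgraph k G \<and> N \<le> card (fst G) \<and>
        min_codeg_ge d G ((\<delta> + \<epsilon>) * real (card (fst G) - d choose (k - d)))"
    define V where "V = fst G"
    define n where "n = card V"
    define r where "r = n mod (k - l)"
    define RR where "RR = {R. R \<subseteq> V \<and> card R = r}"
    have kg: "kgraph k G" and nN: "N \<le> n" and mc: "min_codeg_ge d G ((\<delta> + \<epsilon>) * real (n - d choose (k - d)))"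
      using A unfolding n_def V_def by auto
    have fV: "finite V" using kg unfolding kgraph_def V_def by simp
    have EV: "\<forall>e\<in>snd G. e \<subseteq> V \<and> card e = k" using kg unfolding kgraph_def V_def by simp
    have rk: "r < k - l" unfolding r_def using lk by simp
    hence rk': "r < k" by simp
    have kn: "k < n" using nN unfolding N_def by simp
    have big: "2 * real k ^ 2 \<le> \<epsilon> * real (n - d)"
    proof -
      have "real (nat \<lceil>2 * real k ^ 2 / \<epsilon>\<rceil>) \<le> real (n - d)" using nN unfolding N_def by simp
      moreover have "2 * real k ^ 2 / \<epsilon> \<le> real (nat \<lceil>2 * real k ^ 2 / \<epsilon>\<rceil>)"
        by (meson le_nat_iff of_int_ceiling_le_add_one order_trans real_nat_ceiling_ge)
      ultimately have "2 * real k ^ 2 / \<epsilon> \<le> real (n - d)" by linarith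
      thus ?thesis using \<epsilon> by (simp add: divide_le_eq mult.commute)
    qed
    have til: "\<forall>R\<in>RR. \<exists>H. perfect_frac_tiling k l H \<and> fst H = fst G - R \<and> snd H \<subseteq> snd G"
    proof
      fix R assume "R \<in> RR"
      hence RV: "R \<subseteq> V" and cR: "card R = r" unfolding RR_def by auto
      have fR: "finite R" using RV fV finite_subset by blast
      define GR where "GR = (V - R, {e \<in> snd G. e \<inter> R = {}})"
      have cGR: "card (fst GR) = n - r" unfolding GR_def n_def using RV fR cR by (simp add: card_Diff_subset)
      have "GR \<in> hf_family d k l (\<delta> + \<epsilon> / 2) n0"
        unfolding hf_family_def mem_Collect_eq
      proof (intro conjI)
        show "kgraph k GR" using EV fV unfolding GR_def kgraph_def by auto
        show "n0 \<le> card (fst GR)" using cGR nN rk' unfolding N_def by simp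
        show "(k - l) dvd card (fst GR)" unfolding cGR r_def by (simp add: minus_mod_eq_mult_div)
        show "min_codeg_ge d GR ((\<delta> + \<epsilon> / 2) * real (card (fst GR) - d choose (k - d)))"
          unfolding min_codeg_ge_def
        proof (intro allI impI)
          fix S assume S: "S \<subseteq> fst GR \<and> card S = d"
          have SV: "S \<subseteq> fst G - R" using S unfolding GR_def V_def by simp
          have X1: "card {e\<in>snd G. S \<subseteq> e} \<le> card {e\<in>snd G. e \<inter> R = {} \<and> S \<subseteq> e}
              + card R * ((card (fst G) - Suc d) choose (k - Suc d))"
            by (rule codeg_remove[OF kg fR _ SV _ dk']) (use RV S V_def in auto)
          have X2: "(\<delta> + \<epsilon>) * real (n - d choose (k - d)) \<le> real (card {e\<in>snd G. S \<subseteq> e})"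
            using mc SV S unfolding min_codeg_ge_def by blast
          have eqc: "{e \<in> snd GR. S \<subseteq> e} = {e\<in>snd G. e \<inter> R = {} \<and> S \<subseteq> e}"
            unfolding GR_def by auto
          have "(\<delta> + \<epsilon> / 2) * real ((n - r - d) choose (k - d)) \<le> real (card {e \<in> snd GR. S \<subseteq> e})"
            unfolding eqc
          proof (rule arith_bound[OF dk' _ rk' \<epsilon> \<delta> big _ X2])
            show "Suc d \<le> n" using kn dk' by simp
            have "real (card {e\<in>snd G. S \<subseteq> e}) \<le> real (card {e\<in>snd G. e \<inter> R = {} \<and> S \<subseteq> e}
              + card R * ((card (fst G) - Suc d) choose (k - Suc d)))"
              using X1 of_nat_le_iff by blast
            thus "real (card {e\<in>snd G. S \<subseteq> e}) \<le> real (card {e\<in>snd G. e \<inter> R = {} \<and> S \<subseteq> e})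
              + real r * real ((n - Suc d) choose (k - Suc d))"
              using cR unfolding n_def V_def by simp
          qed
          thus "(\<delta> + \<epsilon> / 2) * real (card (fst GR) - d choose (k - d)) \<le> real (card {e \<in> snd GR. S \<subseteq> e})"
            using cGR by simp
        qed
      qed
      hence "fst (F GR) = fst GR \<and> snd (F GR) \<subseteq> snd GR \<and> perfect_frac_tiling k l (F GR)"
        using F by blast
      moreover have "fst GR = fst G - R" "snd GR \<subseteq> snd G" unfolding GR_def V_def by auto
      ultimately show "\<exists>H. perfect_frac_tiling k l H \<and> fst H = fst G - R \<and> snd H \<subseteq> snd G"
        by blast
    qed
    have cnt: "\<forall>v\<in>fst G. card {R\<in>RR. v \<notin> R} = (n - 1) choose r"
    proof
      fix v assume v: "v \<in> fst G"
      have "{R\<in>RR. v \<notin> R} = {R. R \<subseteq> V - {v} \<and> card R = r}" unfolding RR_def by auto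
      also have "card \<dots> = card (V - {v}) choose r" using fV by (simp add: n_subsets)
      also have "card (V - {v}) = n - 1" using v fV unfolding n_def V_def by simp
      finally show "card {R\<in>RR. v \<notin> R} = (n - 1) choose r" .
    qed
    have fRR: "finite RR" unfolding RR_def using fV by simp
    have c0: "0 < (n - 1) choose r" using rk' kn by (simp add: zero_less_binomial)
    show "perfect_frac_tiling k l G" by (rule tiling_combine[OF fRR lk c0 cnt til])
  qed
qed

theorem proposition2p10:
  fixes d k l :: nat
  assumes "1 \<le> l" and "l < d" and "d \<le> k - 1"
    and "\<not> (k - l) dvd k"
  shows "delta_hf d k l = delta_frct d k l"
proof -
  have "{\<delta>. 0 \<le> \<delta> \<and> \<delta> \<le> 1 \<and>
     (\<forall>\<epsilon>>0. \<exists>n0. hamilton_framework k l (hf_family d k l (\<delta> + \<epsilon>) n0))} =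
     {\<delta>. 0 \<le> \<delta> \<and> \<delta> \<le> 1 \<and>
     (\<forall>\<epsilon>>0. \<exists>n0. \<forall>G :: nat hgraph. kgraph k G \<and> card (fst G) \<ge> n0 \<and>
        min_codeg_ge d G ((\<delta> + \<epsilon>) * real (card (fst G) - d choose (k - d))) \<longrightarrow>
        perfect_frac_tiling k l G)}" (is "{\<delta>. ?A \<delta>} = {\<delta>. ?B \<delta>}")
  proof (intro Collect_cong iffI conjI)
    fix \<delta> :: real
    assume h: "0 \<le> \<delta> \<and> \<delta> \<le> 1 \<and>
     (\<forall>\<epsilon>>0. \<exists>n0. hamilton_framework k l (hf_family d k l (\<delta> + \<epsilon>) n0))"
    show "0 \<le> \<delta>" "\<delta> \<le> 1" using h by auto
    show "\<forall>\<epsilon>>0. \<exists>n0. \<forall>G :: nat hgraph. kgraph k G \<and> card (fst G) \<ge> n0 \<and>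
        min_codeg_ge d G ((\<delta> + \<epsilon>) * real (card (fst G) - d choose (k - d))) \<longrightarrow>
        perfect_frac_tiling k l G"
    proof (intro allI impI)
      fix \<epsilon> :: real assume e: "0 < \<epsilon>"
      then obtain n0 where "hamilton_framework k l (hf_family d k l (\<delta> + \<epsilon> / 2) n0)"
        using h by (meson half_gt_zero)
      from hf_to_frct[OF assms(2,3) _ e this] h
      show "\<exists>n0. \<forall>G :: nat hgraph. kgraph k G \<and> card (fst G) \<ge> n0 \<and>
        min_codeg_ge d G ((\<delta> + \<epsilon>) * real (card (fst G) - d choose (k - d))) \<longrightarrow>
        perfect_frac_tiling k l G" by blast
    qed
  next
    fix \<delta> :: real
    assume h: "0 \<le> \<delta> \<and> \<delta> \<le> 1 \<and>
     (\<forall>\<epsilon>>0. \<exists>n0. \<forall>G :: nat hgraph. kgraph k G \<and> card (fst G) \<ge> n0 \<and>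
        min_codeg_ge d G ((\<delta> + \<epsilon>) * real (card (fst G) - d choose (k - d))) \<longrightarrow>
        perfect_frac_tiling k l G)"
    show "0 \<le> \<delta>" "\<delta> \<le> 1" using h by auto
    show "\<forall>\<epsilon>>0. \<exists>n0. hamilton_framework k l (hf_family d k l (\<delta> + \<epsilon>) n0)"
    proof (intro allI impI)
      fix \<epsilon> :: real assume e: "0 < \<epsilon>"
      then obtain n0 where "\<forall>G :: nat hgraph. kgraph k G \<and> card (fst G) \<ge> n0 \<and>
        min_codeg_ge d G ((\<delta> + \<epsilon>) * real (card (fst G) - d choose (k - d))) \<longrightarrow>
        perfect_frac_tiling k l G" using h by blast
      from frct_to_hf[OF assms(2,3) _ e this] h
      show "\<exists>n0. hamilton_framework k l (hf_family d k l (\<delta> + \<epsilon>) n0)" by blast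
    qed
  qed
  thus ?thesis unfolding delta_hf_def delta_frct_def by simp
qed

end
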